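(* Let $G$ be a topological group (a group with a topology making multiplication jointly continuous and inversion continuous; no separation axiom assumed). Then $G$ is dense-connected if and only if the topology of $G$ is indiscrete.
   Context: A space $X$ is dense-connected if every dense subset of $X$ (with the subspace topology) is connected. *)

theory Defs
  imports "HOL-Analysis.Analysis" "HOL-Algebra.Group"
begin

definition topological_group :: "('a, 'b) monoid_scheme \<Rightarrow> 'a topology \<Rightarrow> bool" where
  "topological_group G X \<longleftrightarrow>
     group G \<and> topspace X = carrier G \<and>
     continuous_map (prod_topology X X) X (\<lambda>(x, y). x \<otimes>\<^bsub>G\<^esub> y) \<and>
     continuous_map X X (\<lambda>x. inv\<^bsub>G\<^esub> x)"

definition dense_connected :: "'a topology \<Rightarrow> bool" where
  "dense_connected X \<longleftrightarrow>
     (\<forall>S. S \<subseteq> topspace X \<and> X closure_of S = topspace X \<longrightarrow> connected_space (subtopology X S))"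

definition indiscrete :: "'a topology \<Rightarrow> bool" where
  "indiscrete X \<longleftrightarrow> (\<forall>U. openin X U \<longrightarrow> U = {} \<or> U = topspace X)"

end

theory Submission
  imports Defs
begin

lemma dc_hyper:
  assumes dc: "dense_connected X" and U: "openin X U" "U \<noteq> {}"
    and V: "openin X V" "V \<noteq> {}"
  shows "U \<inter> V \<noteq> {}"
proof
  assume disj: "U \<inter> V = {}"
  define C where "C = X closure_of U"
  define E where "E = topspace X - C"
  define D where "D = U \<union> E"
  have CX: "C \<subseteq> topspace X" unfolding C_def by (rule closure_of_subset_topspace)
  have UX: "U \<subseteq> topspace X" using U(1) by (rule openin_subset)
  have UC: "U \<subseteq> C" unfolding C_def using UX by (rule closure_of_subset)
  have DX: "D \<subseteq> topspace X" unfolding D_def E_def using UX by blast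
  have Eo: "openin X E" unfolding E_def C_def by (simp add: openin_diff)
  have EX: "E \<subseteq> topspace X" unfolding E_def by blast
  have c1: "X closure_of D = C \<union> X closure_of E"
    unfolding D_def C_def by (rule closure_of_Un)
  have c2: "E \<subseteq> X closure_of E" using EX by (rule closure_of_subset)
  have c3: "X closure_of D \<subseteq> topspace X" by (rule closure_of_subset_topspace)
  have dense: "X closure_of D = topspace X"
    using c1 c2 c3 unfolding E_def by blast
  have "V \<inter> C = {}"
    unfolding C_def using openin_Int_closure_of_eq_empty[OF V(1)] disj by blast
  moreover have VX: "V \<subseteq> topspace X" using V(1) by (rule openin_subset)
  ultimately have "V \<subseteq> E" unfolding E_def by blast
  hence Ene: "E \<noteq> {}" using V(2) by blast
  have "DX' \<longrightarrow> connected_space (subtopology X D)" if "DX' = (D \<subseteq> topspace X \<and> X closure_of D = topspace X)" for DX'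
    using dc that unfolding dense_connected_def by blast
  hence "connected_space (subtopology X D)" using DX dense by blast
  hence conn: "connectedin X D" using DX by (simp add: connectedin_def)
  have UE: "U \<inter> E = {}" using UC unfolding E_def by blast
  have h1: "D \<subseteq> U \<union> E" unfolding D_def by blast
  have h2: "U \<inter> E \<inter> D = {}" using UE by blast
  have h3: "U \<inter> D \<noteq> {}" using U(2) unfolding D_def by blast
  have h4: "E \<inter> D \<noteq> {}" using Ene unfolding D_def by blast
  have "\<not> (\<exists>E1 E2. openin X E1 \<and> openin X E2 \<and> D \<subseteq> E1 \<union> E2 \<and>
          E1 \<inter> E2 \<inter> D = {} \<and> E1 \<inter> D \<noteq> {} \<and> E2 \<inter> D \<noteq> {})"
    using conn unfolding connectedin by (rule conjunct2)
  moreover have "\<exists>E1 E2. openin X E1 \<and> openin X E2 \<and> D \<subseteq> E1 \<union> E2 \<and>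
          E1 \<inter> E2 \<inter> D = {} \<and> E1 \<inter> D \<noteq> {} \<and> E2 \<inter> D \<noteq> {}"
    using U(1) Eo h1 h2 h3 h4 by blast
  ultimately show False by (rule notE)
qed

theorem corollary4p5:
  fixes G :: "('a, 'b) monoid_scheme" and X :: "'a topology"
  assumes "topological_group G X"
  shows "dense_connected X \<longleftrightarrow> indiscrete X"
proof
  assume ind: "indiscrete X"
  show "dense_connected X"
    unfolding dense_connected_def
  proof (intro allI impI)
    fix S assume S: "S \<subseteq> topspace X \<and> X closure_of S = topspace X"
    have "connectedin X S"
      unfolding connectedin
    proof (intro conjI notI)
      show "S \<subseteq> topspace X" using S by blast
      assume "\<exists>E1 E2. openin X E1 \<and> openin X E2 \<and> S \<subseteq> E1 \<union> E2 \<and>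
          E1 \<inter> E2 \<inter> S = {} \<and> E1 \<inter> S \<noteq> {} \<and> E2 \<inter> S \<noteq> {}"
      then obtain E1 E2 where "openin X E1" "openin X E2" "E1 \<inter> E2 \<inter> S = {}"
        "E1 \<inter> S \<noteq> {}" "E2 \<inter> S \<noteq> {}" by blast
      hence "E1 = topspace X" "E2 = topspace X" using ind unfolding indiscrete_def by auto
      with \<open>E1 \<inter> E2 \<inter> S = {}\<close> \<open>E1 \<inter> S \<noteq> {}\<close> show False by auto
    qed
    thus "connected_space (subtopology X S)" by (rule connected_space_subtopology)
  qed
next
  assume dc: "dense_connected X"
  have tg: "group G \<and> topspace X = carrier G \<and>
     continuous_map (prod_topology X X) X (\<lambda>(x, y). x \<otimes>\<^bsub>G\<^esub> y) \<and>
     continuous_map X X (\<lambda>x. inv\<^bsub>G\<^esub> x)"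
    using assms unfolding topological_group_def by assumption
  note grp = conjunct1[OF tg]
  note top = conjunct1[OF conjunct2[OF tg]]
  note mc = conjunct1[OF conjunct2[OF conjunct2[OF tg]]]
  note ic = conjunct2[OF conjunct2[OF conjunct2[OF tg]]]
  show "indiscrete X"
    unfolding indiscrete_def
  proof (intro allI impI)
    fix U assume U: "openin X U"
    show "U = {} \<or> U = topspace X"
    proof (rule ccontr)
      assume "\<not> (U = {} \<or> U = topspace X)"
      then obtain a g where a: "a \<in> U" and g: "g \<in> topspace X" "g \<notin> U"
        using U openin_subset by blast
      have aX: "a \<in> carrier G" using a U openin_subset top by blast
      have gG: "g \<in> carrier G" using g top by blast
      define P where "P = {z \<in> topspace (prod_topology X X). (\<lambda>(x, y). x \<otimes>\<^bsub>G\<^esub> y) z \<in> U}"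
      have Po: "openin (prod_topology X X) P"
        unfolding P_def by (rule openin_continuous_map_preimage[OF mc U])
      have mon: "monoid G" using grp by (rule group.is_monoid)
      have "a \<otimes>\<^bsub>G\<^esub> \<one>\<^bsub>G\<^esub> = a" by (rule monoid.r_one[OF mon aX])
      moreover have "\<one>\<^bsub>G\<^esub> \<in> carrier G" by (rule monoid.one_closed[OF mon])
      ultimately have aP: "(a, \<one>\<^bsub>G\<^esub>) \<in> P" using aX a top unfolding P_def by auto
      obtain V1 V2 where V: "openin X V1" "openin X V2" "a \<in> V1" "\<one>\<^bsub>G\<^esub> \<in> V2" "V1 \<times> V2 \<subseteq> P"
        using Po[unfolded openin_prod_topology_alt, rule_format, OF aP] by (elim exE conjE)
      define B where "B = {x \<in> topspace X. inv\<^bsub>G\<^esub> x \<otimes>\<^bsub>G\<^esub> g \<in> V2}"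
      have cB: "continuous_map X X (\<lambda>x. inv\<^bsub>G\<^esub> x \<otimes>\<^bsub>G\<^esub> g)"
      proof -
        have "continuous_map X (prod_topology X X) (\<lambda>x. (inv\<^bsub>G\<^esub> x, g))"
          using ic g by (intro continuous_map_pairedI continuous_map_const[THEN iffD2] disjI2)
        from continuous_map_compose[OF this mc] show ?thesis by (simp add: o_def)
      qed
      have Bo: "openin X B" unfolding B_def by (rule openin_continuous_map_preimage[OF cB V(2)])
      have "g \<in> B" using g gG V(4) group.l_inv[OF grp gG] unfolding B_def by simp
      hence "V1 \<inter> B \<noteq> {}" using dc_hyper[OF dc V(1) _ Bo] V(3) by blast
      then obtain x where x: "x \<in> V1" "x \<in> topspace X" "inv\<^bsub>G\<^esub> x \<otimes>\<^bsub>G\<^esub> g \<in> V2"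
        unfolding B_def by blast
      hence "(x, inv\<^bsub>G\<^esub> x \<otimes>\<^bsub>G\<^esub> g) \<in> P" using V(5) by blast
      hence "x \<otimes>\<^bsub>G\<^esub> (inv\<^bsub>G\<^esub> x \<otimes>\<^bsub>G\<^esub> g) \<in> U" by (simp add: P_def)
      moreover have "x \<otimes>\<^bsub>G\<^esub> (inv\<^bsub>G\<^esub> x \<otimes>\<^bsub>G\<^esub> g) = g"
      proof -
        have xG: "x \<in> carrier G" using x top by blast
        have "x \<otimes>\<^bsub>G\<^esub> (inv\<^bsub>G\<^esub> x \<otimes>\<^bsub>G\<^esub> g) = (x \<otimes>\<^bsub>G\<^esub> inv\<^bsub>G\<^esub> x) \<otimes>\<^bsub>G\<^esub> g"
          using monoid.m_assoc[OF mon xG group.inv_closed[OF grp xG] gG] by simp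
        also have "\<dots> = g" using group.r_inv[OF grp xG] monoid.l_one[OF mon gG] by simp
        finally show ?thesis .
      qed
      ultimately show False using g by simp
    qed
  qed
qed

end
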